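(* Let $C\in\mathbb{R}^{p\times p}$ be positive definite, $w\in\mathbb{R}^p$, $\mu>0$ and $\tau>0$. Let $\mathcal{D}=\{z\in\mathbb{C}^p : |\operatorname{Re} z_j|<\mu,\ j=1,\dots,p\}$ and define on $\mathcal{D}$ the holomorphic function $$H_\tau(z)=(z-w)^TC^{-1}(z-w)-\frac1\tau\sum_{j=1}^p\ln(\mu^2-z_j^2).$$ Then $H_\tau$ has a unique saddle point (critical point) $\hat u_\tau$ in $\mathcal{D}$. This saddle point is real, $\hat u_\tau\in\mathcal{D}\cap\mathbb{R}^p$, and it is a solution $u\in\mathbb{R}^p$ of the system of cubic equations $$(\mu^2-u_j^2)\,[C^{-1}(w-u)]_j-\frac{u_j}{\tau}=0,\qquad j=1,\dots,p.$$
   Context: Here $\ln$ denotes the principal branch of the logarithm; on $\mathcal{D}$ one has $\operatorname{Re}(\mu^2-z_j^2)$ avoiding the branch issues because $|\operatorname{Re} z_j|<\mu$ (equivalently, $\ln(\mu^2-z_j^2)=\ln(\mu-z_j)+\ln(\mu+z_j)$ with both arguments having positive real part). A saddle point means a point $z\in\mathcal{D}$ with $\nabla H_\tau(z)=0$. *)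

theory Defs
  imports "HOL-Analysis.Analysis"
begin

definition pos_def_mat :: "real^'n^'n \<Rightarrow> bool" where
  "pos_def_mat C \<longleftrightarrow> transpose C = C \<and> (\<forall>x. x \<noteq> 0 \<longrightarrow> x \<bullet> (C *v x) > 0)"

definition strip_dom :: "real \<Rightarrow> (complex^'n) set" where
  "strip_dom \<mu> = {z. \<forall>j. \<bar>Re (z $ j)\<bar> < \<mu>}"

definition H_tau :: "real^'n^'n \<Rightarrow> real^'n \<Rightarrow> real \<Rightarrow> real \<Rightarrow> complex^'n \<Rightarrow> complex" where
  "H_tau C w \<mu> \<tau> z =
     (\<Sum>i\<in>UNIV. \<Sum>k\<in>UNIV. (z $ i - complex_of_real (w $ i)) * complex_of_real (matrix_inv C $ i $ k)
                           * (z $ k - complex_of_real (w $ k)))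
     - complex_of_real (1 / \<tau>) * (\<Sum>j\<in>UNIV. Ln (complex_of_real (\<mu>\<^sup>2) - (z $ j)\<^sup>2))"

definition saddle_point :: "(complex^'n \<Rightarrow> complex) \<Rightarrow> complex^'n \<Rightarrow> bool" where
  "saddle_point H z \<longleftrightarrow>
     (\<forall>j. ((\<lambda>t. H (z + t *s axis j 1)) has_field_derivative 0) (at 0))"

end

theory Submission
  imports Defs
begin

lemma posdef_invertible:
  fixes C :: "real^'n^'n"
  assumes "pos_def_mat C"
  shows "invertible C"
proof -
  have "\<forall>x. C *v x = 0 \<longrightarrow> x = 0"
    using assms unfolding pos_def_mat_def by (metis inner_zero_right less_irrefl)
  then have "\<exists>B. B ** C = mat 1" using matrix_left_invertible_ker by blast
  then show ?thesis using invertible_left_inverse by blast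
qed

lemma matrix_inv_props:
  fixes C :: "real^'n^'n"
  assumes "invertible C"
  shows "C ** matrix_inv C = mat 1" "matrix_inv C ** C = mat 1"
proof -
  have "\<exists>A'. C ** A' = mat 1 \<and> A' ** C = mat 1" using assms unfolding invertible_def by blast
  from someI_ex[OF this] show "C ** matrix_inv C = mat 1" "matrix_inv C ** C = mat 1"
    unfolding matrix_inv_def by auto
qed

lemma inv_sym:
  fixes C :: "real^'n^'n"
  assumes "pos_def_mat C"
  shows "matrix_inv C $ i $ k = matrix_inv C $ k $ i"
proof -
  let ?A = "matrix_inv C"
  have inv: "invertible C" using posdef_invertible assms by blast
  have tC: "transpose C = C" using assms unfolding pos_def_mat_def by blast
  have "transpose ?A ** C = mat 1"
    using matrix_inv_props(1)[OF inv] matrix_transpose_mul[of C ?A] tC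
    by (metis transpose_mat)
  then have "transpose ?A = ?A"
    by (metis matrix_inv_props(1)[OF inv] matrix_mul_assoc matrix_mul_lid matrix_mul_rid)
  then show ?thesis by (metis transpose_def vec_lambda_beta)
qed

lemma inv_pos:
  fixes C :: "real^'n^'n"
  assumes "pos_def_mat C" "y \<noteq> 0"
  shows "y \<bullet> (matrix_inv C *v y) > 0"
proof -
  let ?A = "matrix_inv C"
  have inv: "invertible C" using posdef_invertible assms by blast
  have tC: "transpose C = C" using assms unfolding pos_def_mat_def by blast
  define v where "v = ?A *v y"
  have Cv: "C *v v = y" unfolding v_def
    by (simp add: matrix_vector_mul_assoc matrix_inv_props(1)[OF inv])
  have "v \<noteq> 0" using Cv assms(2) by auto
  then have "v \<bullet> (C *v v) > 0" using assms(1) unfolding pos_def_mat_def by blast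
  moreover have "v \<bullet> (C *v v) = y \<bullet> v"
    using Cv by (simp add: inner_commute)
  ultimately show ?thesis unfolding v_def by simp
qed

lemma inv_psd:
  fixes C :: "real^'n^'n"
  assumes "pos_def_mat C"
  shows "y \<bullet> (matrix_inv C *v y) \<ge> 0"
  using inv_pos[OF assms, of y] by (cases "y = 0") auto

lemma quad_sum:
  fixes A :: "real^'n^'n"
  shows "y \<bullet> (A *v y) = (\<Sum>i\<in>UNIV. \<Sum>k\<in>UNIV. y$i * A$i$k * y$k)"
  by (simp add: inner_vec_def matrix_vector_mult_def sum_distrib_left mult.assoc)

lemma strip_not_nonpos:
  assumes "\<bar>Re z\<bar> < \<mu>"
  shows "complex_of_real (\<mu>\<^sup>2) - z\<^sup>2 \<notin> \<real>\<^sub>\<le>\<^sub>0"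
proof
  assume "complex_of_real (\<mu>\<^sup>2) - z\<^sup>2 \<in> \<real>\<^sub>\<le>\<^sub>0"
  then have im: "Im z * Re z = 0" and re: "\<mu>\<^sup>2 - (Re z)\<^sup>2 + (Im z)\<^sup>2 \<le> 0"
    by (auto simp: complex_nonpos_Reals_iff power2_eq_square)
  have "(Re z)\<^sup>2 = \<bar>Re z\<bar>\<^sup>2" by simp
  also have "\<dots> < \<mu>\<^sup>2" using assms by (intro power_strict_mono) auto
  finally show False using re zero_le_power2[of "Im z"] by linarith
qed

lemma strip_nz:
  assumes "\<bar>Re z\<bar> < \<mu>"
  shows "complex_of_real (\<mu>\<^sup>2) - z\<^sup>2 \<noteq> 0"
  using strip_not_nonpos[OF assms] by auto

lemma H_deriv:
  fixes C :: "real^'n^'n"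
  assumes "z \<in> strip_dom \<mu>"
  shows "((\<lambda>t. H_tau C w \<mu> \<tau> (z + t *s axis j 1)) has_field_derivative
     ((\<Sum>k\<in>UNIV. complex_of_real (matrix_inv C $ j $ k) * (z$k - complex_of_real (w$k)))
      + (\<Sum>i\<in>UNIV. (z$i - complex_of_real (w$i)) * complex_of_real (matrix_inv C $ i $ j))
      + complex_of_real (1/\<tau>) * (2 * z$j / (complex_of_real (\<mu>\<^sup>2) - (z$j)\<^sup>2)))) (at 0)"
proof -
  let ?A = "matrix_inv C"
  define e where "e i = (axis j 1 :: complex^'n) $ i" for i
  have comp: "(z + t *s axis j 1) $ i = z$i + t * e i" for t i by (simp add: e_def)
  have nn: "complex_of_real (\<mu>\<^sup>2) - (z$i)\<^sup>2 \<notin> \<real>\<^sub>\<le>\<^sub>0" for i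
    using assms strip_not_nonpos unfolding strip_dom_def by blast
  have d1: "((\<lambda>t. (\<Sum>i\<in>UNIV. \<Sum>k\<in>UNIV. (z$i + t * e i - complex_of_real (w $ i)) * complex_of_real (?A $ i $ k)
                           * (z$k + t * e k - complex_of_real (w $ k)))) has_field_derivative
     (\<Sum>i\<in>UNIV. \<Sum>k\<in>UNIV. e i * complex_of_real (?A $ i $ k) * (z$k - complex_of_real (w $ k))
        + (z$i - complex_of_real (w $ i)) * complex_of_real (?A $ i $ k) * e k)) (at 0)"
  proof (intro DERIV_sum)
    fix i k :: 'n
    show "((\<lambda>t. (z$i + t * e i - complex_of_real (w $ i)) * complex_of_real (?A $ i $ k)
                           * (z$k + t * e k - complex_of_real (w $ k))) has_field_derivative
       e i * complex_of_real (?A $ i $ k) * (z$k - complex_of_real (w $ k))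
        + (z$i - complex_of_real (w $ i)) * complex_of_real (?A $ i $ k) * e k) (at 0)"
      by (auto intro!: derivative_eq_intros simp: algebra_simps)
  qed
  have d2: "((\<lambda>t. (\<Sum>i\<in>UNIV. Ln (complex_of_real (\<mu>\<^sup>2) - (z$i + t * e i)\<^sup>2))) has_field_derivative
     (\<Sum>i\<in>UNIV. - (2 * z$i * e i) / (complex_of_real (\<mu>\<^sup>2) - (z$i)\<^sup>2))) (at 0)"
  proof (rule DERIV_sum)
    fix i :: 'n
    show "((\<lambda>t. Ln (complex_of_real (\<mu>\<^sup>2) - (z$i + t * e i)\<^sup>2)) has_field_derivative
       - (2 * z$i * e i) / (complex_of_real (\<mu>\<^sup>2) - (z$i)\<^sup>2)) (at 0)"
      using nn[of i]
      by (auto intro!: derivative_eq_intros simp: field_simps)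
  qed
  have hd: "((\<lambda>t. H_tau C w \<mu> \<tau> (z + t *s axis j 1)) has_field_derivative
     (\<Sum>i\<in>UNIV. \<Sum>k\<in>UNIV. e i * complex_of_real (?A $ i $ k) * (z$k - complex_of_real (w $ k))
        + (z$i - complex_of_real (w $ i)) * complex_of_real (?A $ i $ k) * e k)
     - complex_of_real (1 / \<tau>) * (\<Sum>i\<in>UNIV. - (2 * z$i * e i) / (complex_of_real (\<mu>\<^sup>2) - (z$i)\<^sup>2))) (at 0)"
    unfolding H_tau_def comp
    by (rule DERIV_diff[OF d1 DERIV_cmult[OF d2]])
  have eq1: "(\<Sum>i\<in>UNIV. \<Sum>k\<in>UNIV. e i * complex_of_real (?A $ i $ k) * (z$k - complex_of_real (w $ k))
        + (z$i - complex_of_real (w $ i)) * complex_of_real (?A $ i $ k) * e k)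
     = (\<Sum>k\<in>UNIV. complex_of_real (?A $ j $ k) * (z$k - complex_of_real (w$k)))
      + (\<Sum>i\<in>UNIV. (z$i - complex_of_real (w$i)) * complex_of_real (?A $ i $ j))"
  proof -
    have ei: "e i = of_bool (i = j)" for i by (simp add: e_def axis_def)
    have s1: "(\<Sum>i\<in>UNIV. \<Sum>k\<in>UNIV. e i * complex_of_real (?A $ i $ k) * (z$k - complex_of_real (w $ k)))
       = (\<Sum>k\<in>UNIV. complex_of_real (?A $ j $ k) * (z$k - complex_of_real (w$k)))"
      unfolding ei by (simp add: sum_distrib_left[symmetric] mult.assoc)
    have s2: "(\<Sum>i\<in>UNIV. \<Sum>k\<in>UNIV. (z$i - complex_of_real (w $ i)) * complex_of_real (?A $ i $ k) * e k)
       = (\<Sum>i\<in>UNIV. (z$i - complex_of_real (w$i)) * complex_of_real (?A $ i $ j))"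
      unfolding ei by simp
    show ?thesis unfolding sum.distrib s1 s2 ..
  qed
  have eq2: "(\<Sum>i\<in>UNIV. - (2 * z$i * e i) / (complex_of_real (\<mu>\<^sup>2) - (z$i)\<^sup>2))
     = - (2 * z$j / (complex_of_real (\<mu>\<^sup>2) - (z$j)\<^sup>2))"
  proof -
    have ei: "e i = of_bool (i = j)" for i by (simp add: e_def axis_def)
    have "(\<Sum>i\<in>UNIV. - (2 * z$i * e i) / (complex_of_real (\<mu>\<^sup>2) - (z$i)\<^sup>2))
       = (\<Sum>i\<in>UNIV. e i * (- (2 * z$i / (complex_of_real (\<mu>\<^sup>2) - (z$i)\<^sup>2))))"
      by (intro sum.cong refl) (simp add: field_simps)
    also have "\<dots> = - (2 * z$j / (complex_of_real (\<mu>\<^sup>2) - (z$j)\<^sup>2))"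
      unfolding ei sum_of_bool_mult_eq[OF finite_class.finite_UNIV] by simp
    finally show ?thesis .
  qed
  show ?thesis using hd unfolding eq1 eq2 mult_minus_right diff_minus_eq_add by simp
qed

definition Gc :: "real^'n^'n \<Rightarrow> real^'n \<Rightarrow> real \<Rightarrow> real \<Rightarrow> complex^'n \<Rightarrow> 'n \<Rightarrow> complex" where
  "Gc C w \<mu> \<tau> z j = (complex_of_real (\<mu>\<^sup>2) - (z$j)\<^sup>2) *
      (\<Sum>k\<in>UNIV. complex_of_real (matrix_inv C $ j $ k) * (complex_of_real (w$k) - z$k)) - z$j / complex_of_real \<tau>"

definition Rr :: "real^'n^'n \<Rightarrow> real^'n \<Rightarrow> real \<Rightarrow> real \<Rightarrow> real^'n \<Rightarrow> 'n \<Rightarrow> real" where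
  "Rr C w \<mu> \<tau> u j = (\<mu>\<^sup>2 - (u$j)\<^sup>2) * ((matrix_inv C *v (w - u)) $ j) - u$j / \<tau>"

lemma Gc_of_real:
  "Gc C w \<mu> \<tau> (\<chi> i. complex_of_real (u$i)) j = complex_of_real (Rr C w \<mu> \<tau> u j)"
  unfolding Gc_def Rr_def by (simp add: matrix_vector_mult_def of_real_sum algebra_simps)

lemma saddle_iff:
  fixes C :: "real^'n^'n"
  assumes "pos_def_mat C" "z \<in> strip_dom \<mu>" "\<tau> > 0"
  shows "saddle_point (H_tau C w \<mu> \<tau>) z \<longleftrightarrow> (\<forall>j. Gc C w \<mu> \<tau> z j = 0)"
proof -
  let ?A = "matrix_inv C"
  define D where "D j = complex_of_real (\<mu>\<^sup>2) - (z$j)\<^sup>2" for j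
  define S where "S j = (\<Sum>k\<in>UNIV. complex_of_real (?A $ j $ k) * (z$k - complex_of_real (w$k)))" for j
  define Dv where "Dv j = (\<Sum>k\<in>UNIV. complex_of_real (?A $ j $ k) * (z$k - complex_of_real (w$k)))
      + (\<Sum>i\<in>UNIV. (z$i - complex_of_real (w$i)) * complex_of_real (?A $ i $ j))
      + complex_of_real (1/\<tau>) * (2 * z$j / (complex_of_real (\<mu>\<^sup>2) - (z$j)\<^sup>2))" for j
  have Dnz: "D j \<noteq> 0" for j using assms(2) strip_nz unfolding strip_dom_def D_def by blast
  have S2: "(\<Sum>i\<in>UNIV. (z$i - complex_of_real (w$i)) * complex_of_real (?A $ i $ j)) = S j" for j
    unfolding S_def by (intro sum.cong refl) (simp add: inv_sym[OF assms(1), of _ j])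
  have negS: "(\<Sum>k\<in>UNIV. complex_of_real (?A $ j $ k) * (complex_of_real (w$k) - z$k)) = - S j" for j
    unfolding S_def sum_negf[symmetric] by (intro sum.cong refl) (simp add: algebra_simps)
  have GS: "Gc C w \<mu> \<tau> z j = - (D j * S j + z$j / complex_of_real \<tau>)" for j
    unfolding Gc_def negS D_def by (simp add: algebra_simps)
  have DvG: "Dv j = - (2 / D j) * Gc C w \<mu> \<tau> z j" for j
    using Dnz[of j] assms(3) unfolding Dv_def S2 GS D_def[symmetric] S_def[symmetric]
    by (simp add: field_simps)
  have der: "((\<lambda>t. H_tau C w \<mu> \<tau> (z + t *s axis j 1)) has_field_derivative Dv j) (at 0)" for j
    unfolding Dv_def by (rule H_deriv[OF assms(2)])
  have "saddle_point (H_tau C w \<mu> \<tau>) z \<longleftrightarrow> (\<forall>j. Dv j = 0)"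
    unfolding saddle_point_def using der DERIV_unique by metis
  also have "\<dots> \<longleftrightarrow> (\<forall>j. Gc C w \<mu> \<tau> z j = 0)"
    using DvG Dnz by simp
  finally show ?thesis .
qed

lemma im_div_sign:
  fixes z :: complex
  assumes "complex_of_real (\<mu>\<^sup>2) - z\<^sup>2 \<noteq> 0"
  shows "Im z * Im (z / (complex_of_real (\<mu>\<^sup>2) - z\<^sup>2)) \<ge> 0"
proof -
  define D where "D = complex_of_real (\<mu>\<^sup>2) - z\<^sup>2"
  have ReD: "Re D = \<mu>\<^sup>2 - (Re z)\<^sup>2 + (Im z)\<^sup>2" and ImD: "Im D = - 2 * Re z * Im z"
    unfolding D_def by (simp_all add: power2_eq_square)
  have N: "(Re D)\<^sup>2 + (Im D)\<^sup>2 > 0" using assms unfolding D_def[symmetric]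
    by (metis complex_eq_0 add_pos_nonneg add_nonneg_pos zero_le_power2 less_eq_real_def)
  have "Im (z / D) = (Im z * Re D - Re z * Im D) / ((Re D)\<^sup>2 + (Im D)\<^sup>2)"
    by (simp add: Im_divide power2_eq_square)
  also have "Im z * Re D - Re z * Im D = Im z * (\<mu>\<^sup>2 + (Re z)\<^sup>2 + (Im z)\<^sup>2)"
    unfolding ReD ImD by (simp add: algebra_simps power2_eq_square)
  finally have "Im z * Im (z / D) = (Im z)\<^sup>2 * (\<mu>\<^sup>2 + (Re z)\<^sup>2 + (Im z)\<^sup>2) / ((Re D)\<^sup>2 + (Im D)\<^sup>2)"
    by (simp add: power2_eq_square)
  also have "\<dots> \<ge> 0" using N by (intro divide_nonneg_pos mult_nonneg_nonneg) auto
  finally show ?thesis unfolding D_def .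
qed

lemma im_zero:
  fixes C :: "real^'n^'n"
  assumes "pos_def_mat C" "z \<in> strip_dom \<mu>" "\<tau> > 0" "\<forall>j. Gc C w \<mu> \<tau> z j = 0"
  shows "Im (z$j) = 0"
proof -
  let ?A = "matrix_inv C"
  define D where "D j = complex_of_real (\<mu>\<^sup>2) - (z$j)\<^sup>2" for j
  define y where "y = (\<chi> j. Im (z$j))"
  have Dnz: "D j \<noteq> 0" for j using assms(2) strip_nz unfolding strip_dom_def D_def by blast
  have T: "(\<Sum>k\<in>UNIV. complex_of_real (?A $ j $ k) * (complex_of_real (w$k) - z$k))
           = (z$j / D j) / complex_of_real \<tau>" for j
    using assms(4) Dnz[of j] assms(3) unfolding Gc_def D_def[symmetric]
    by (auto simp: field_simps)
  have Ay: "(?A *v y) $ j = - Im (z$j / D j) / \<tau>" for j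
  proof -
    have "Im (\<Sum>k\<in>UNIV. complex_of_real (?A $ j $ k) * (complex_of_real (w$k) - z$k)) = - (?A *v y) $ j"
      unfolding y_def by (simp add: matrix_vector_mult_def Im_sum sum_negf[symmetric])
    moreover have "Im ((z$j / D j) / complex_of_real \<tau>) = Im (z$j / D j) / \<tau>"
      by (simp only: Im_divide_of_real)
    ultimately show ?thesis using T[of j] by simp
  qed
  have "y \<bullet> (?A *v y) = (\<Sum>j\<in>UNIV. - (y$j * Im (z$j / D j)) / \<tau>)"
    unfolding inner_vec_def Ay by simp
  also have "\<dots> \<le> 0"
    using im_div_sign Dnz assms(3) unfolding D_def y_def
    by (intro sum_nonpos) (simp add: divide_nonpos_pos)
  finally have "y = 0" using inv_pos[OF assms(1), of y] by (metis not_le)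
  then show ?thesis unfolding y_def by (metis vec_lambda_beta zero_index)
qed

lemma mono_h:
  fixes a b \<mu> :: real
  assumes "\<bar>a\<bar> < \<mu>" "\<bar>b\<bar> < \<mu>"
  shows "(a - b) * (a / (\<mu>\<^sup>2 - a\<^sup>2) - b / (\<mu>\<^sup>2 - b\<^sup>2)) \<ge> 0"
proof -
  have a2: "a\<^sup>2 < \<mu>\<^sup>2" using assms(1) by (metis abs_ge_zero power2_abs power_strict_mono zero_less_numeral)
  have b2: "b\<^sup>2 < \<mu>\<^sup>2" using assms(2) by (metis abs_ge_zero power2_abs power_strict_mono zero_less_numeral)
  have "\<bar>a\<bar> * \<bar>b\<bar> < \<mu> * \<mu>" using assms by (intro mult_strict_mono) auto
  then have ab: "\<mu>\<^sup>2 + a * b > 0" by (simp add: power2_eq_square abs_mult[symmetric])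
  have "a / (\<mu>\<^sup>2 - a\<^sup>2) - b / (\<mu>\<^sup>2 - b\<^sup>2) = (a - b) * (\<mu>\<^sup>2 + a * b) / ((\<mu>\<^sup>2 - a\<^sup>2) * (\<mu>\<^sup>2 - b\<^sup>2))"
    using a2 b2 by (simp add: field_simps) (simp add: algebra_simps power2_eq_square)
  then have "(a - b) * (a / (\<mu>\<^sup>2 - a\<^sup>2) - b / (\<mu>\<^sup>2 - b\<^sup>2)) = (a - b)\<^sup>2 * (\<mu>\<^sup>2 + a * b) / ((\<mu>\<^sup>2 - a\<^sup>2) * (\<mu>\<^sup>2 - b\<^sup>2))"
    by (simp add: power2_eq_square)
  also have "\<dots> \<ge> 0" using a2 b2 ab by (intro divide_nonneg_pos mult_nonneg_nonneg mult_pos_pos) auto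
  finally show ?thesis .
qed

lemma real_unique:
  fixes C :: "real^'n^'n"
  assumes "pos_def_mat C" "\<tau> > 0"
    and "\<forall>j. \<bar>u$j\<bar> < \<mu>" "\<forall>j. Rr C w \<mu> \<tau> u j = 0"
    and "\<forall>j. \<bar>v$j\<bar> < \<mu>" "\<forall>j. Rr C w \<mu> \<tau> v j = 0"
  shows "u = v"
proof -
  let ?A = "matrix_inv C"
  define h where "h x = x / (\<mu>\<^sup>2 - x\<^sup>2)" for x :: real
  have nz: "\<mu>\<^sup>2 - x\<^sup>2 \<noteq> 0" if "\<bar>x\<bar> < \<mu>" for x
  proof -
    have "x\<^sup>2 < \<mu>\<^sup>2" using that by (metis abs_ge_zero power2_abs power_strict_mono zero_less_numeral)
    then show ?thesis by simp
  qed
  have eq: "(?A *v (w - x)) $ j = h (x$j) / \<tau>" if "\<forall>j. \<bar>x$j\<bar> < \<mu>" "\<forall>j. Rr C w \<mu> \<tau> x j = 0" for x j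
  proof -
    have "(\<mu>\<^sup>2 - (x$j)\<^sup>2) * (?A *v (w - x)) $ j = x$j / \<tau>"
      using that(2) unfolding Rr_def by simp
    then have "(?A *v (w - x)) $ j = (x$j / \<tau>) / (\<mu>\<^sup>2 - (x$j)\<^sup>2)"
      using nz[of "x$j"] that(1) assms(2) by (simp add: eq_divide_eq mult.commute) (simp add: mult_ac)
    then show ?thesis by (simp add: h_def)
  qed
  define d where "d = u - v"
  have Ad: "(?A *v d) $ j = - (h (u$j) - h (v$j)) / \<tau>" for j
  proof -
    have dd: "d = (w - v) - (w - u)" unfolding d_def by simp
    have "?A *v d = ?A *v (w - v) - ?A *v (w - u)" unfolding dd
      by (rule matrix_vector_mult_diff_distrib)
    then have "(?A *v d)$j = (?A *v (w - v))$j - (?A *v (w - u))$j" by simp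
    also have "\<dots> = h (v$j) / \<tau> - h (u$j) / \<tau>"
      using eq[OF assms(3,4), of j] eq[OF assms(5,6), of j] by simp
    finally show ?thesis by (simp add: diff_divide_distrib)
  qed
  have "d \<bullet> (?A *v d) = (\<Sum>j\<in>UNIV. - ((u$j - v$j) * (h (u$j) - h (v$j))) / \<tau>)"
    unfolding inner_vec_def Ad by (simp add: d_def) (intro sum.cong refl, simp add: algebra_simps diff_divide_distrib)
  also have "\<dots> \<le> 0"
    using mono_h assms(2,3,5) unfolding h_def
    by (intro sum_nonpos) (simp add: divide_nonpos_pos)
  finally have "d = 0" using inv_pos[OF assms(1), of d] by (metis not_le)
  then show ?thesis unfolding d_def by simp
qed

definition Fr :: "real^'n^'n \<Rightarrow> real^'n \<Rightarrow> real \<Rightarrow> real \<Rightarrow> real^'n \<Rightarrow> real" where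
  "Fr C w \<mu> \<tau> u =
     (\<Sum>i\<in>UNIV. \<Sum>k\<in>UNIV. (u $ i - w $ i) * (matrix_inv C $ i $ k) * (u $ k - w $ k))
     - (1 / \<tau>) * (\<Sum>j\<in>UNIV. ln (\<mu>\<^sup>2 - (u $ j)\<^sup>2))"

lemma sq_lt: "\<bar>x::real\<bar> < \<mu> \<Longrightarrow> x\<^sup>2 < \<mu>\<^sup>2"
  by (metis abs_ge_zero power2_abs power_strict_mono zero_less_numeral)

lemma Fr_deriv:
  fixes C :: "real^'n^'n"
  assumes "\<forall>i. \<bar>u$i\<bar> < \<mu>"
  shows "((\<lambda>t. Fr C w \<mu> \<tau> (u + t *s axis j 1)) has_real_derivative
     ((\<Sum>k\<in>UNIV. (matrix_inv C $ j $ k) * (u$k - w$k))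
      + (\<Sum>i\<in>UNIV. (u$i - w$i) * (matrix_inv C $ i $ j))
      + (1/\<tau>) * (2 * u$j / (\<mu>\<^sup>2 - (u$j)\<^sup>2)))) (at 0)"
proof -
  let ?A = "matrix_inv C"
  define e where "e i = (axis j 1 :: real^'n) $ i" for i
  have comp: "(u + t *s axis j 1) $ i = u$i + t * e i" for t i by (simp add: e_def)
  have pos: "\<mu>\<^sup>2 - (u$i)\<^sup>2 > 0" for i using sq_lt assms by force
  have d1: "((\<lambda>t. (\<Sum>i\<in>UNIV. \<Sum>k\<in>UNIV. (u$i + t * e i - w $ i) * (?A $ i $ k)
                           * (u$k + t * e k - w $ k))) has_real_derivative
     (\<Sum>i\<in>UNIV. \<Sum>k\<in>UNIV. e i * (?A $ i $ k) * (u$k - w $ k)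
        + (u$i - w $ i) * (?A $ i $ k) * e k)) (at 0)"
  proof (intro DERIV_sum)
    fix i k :: 'n
    show "((\<lambda>t. (u$i + t * e i - w $ i) * (?A $ i $ k)
                           * (u$k + t * e k - w $ k)) has_real_derivative
       e i * (?A $ i $ k) * (u$k - w $ k)
        + (u$i - w $ i) * (?A $ i $ k) * e k) (at 0)"
      by (auto intro!: derivative_eq_intros simp: algebra_simps)
  qed
  have d2: "((\<lambda>t. (\<Sum>i\<in>UNIV. ln (\<mu>\<^sup>2 - (u$i + t * e i)\<^sup>2))) has_real_derivative
     (\<Sum>i\<in>UNIV. - (2 * u$i * e i) / (\<mu>\<^sup>2 - (u$i)\<^sup>2))) (at 0)"
  proof (rule DERIV_sum)
    fix i :: 'n
    show "((\<lambda>t. ln (\<mu>\<^sup>2 - (u$i + t * e i)\<^sup>2)) has_real_derivative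
       - (2 * u$i * e i) / (\<mu>\<^sup>2 - (u$i)\<^sup>2)) (at 0)"
      using pos[of i]
      by (auto intro!: derivative_eq_intros simp: field_simps)
  qed
  have hd: "((\<lambda>t. Fr C w \<mu> \<tau> (u + t *s axis j 1)) has_real_derivative
     (\<Sum>i\<in>UNIV. \<Sum>k\<in>UNIV. e i * (?A $ i $ k) * (u$k - w $ k)
        + (u$i - w $ i) * (?A $ i $ k) * e k)
     - (1 / \<tau>) * (\<Sum>i\<in>UNIV. - (2 * u$i * e i) / (\<mu>\<^sup>2 - (u$i)\<^sup>2))) (at 0)"
    unfolding Fr_def comp
    by (rule DERIV_diff[OF d1 DERIV_cmult[OF d2]])
  have ei: "e i = of_bool (i = j)" for i by (simp add: e_def axis_def)
  have eq1: "(\<Sum>i\<in>UNIV. \<Sum>k\<in>UNIV. e i * (?A $ i $ k) * (u$k - w $ k)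
        + (u$i - w $ i) * (?A $ i $ k) * e k)
     = (\<Sum>k\<in>UNIV. (?A $ j $ k) * (u$k - w$k))
      + (\<Sum>i\<in>UNIV. (u$i - w$i) * (?A $ i $ j))"
  proof -
    have s1: "(\<Sum>i\<in>UNIV. \<Sum>k\<in>UNIV. e i * (?A $ i $ k) * (u$k - w $ k))
       = (\<Sum>k\<in>UNIV. (?A $ j $ k) * (u$k - w$k))"
      unfolding ei by (simp add: sum_distrib_left[symmetric] mult.assoc)
    have s2: "(\<Sum>i\<in>UNIV. \<Sum>k\<in>UNIV. (u$i - w $ i) * (?A $ i $ k) * e k)
       = (\<Sum>i\<in>UNIV. (u$i - w$i) * (?A $ i $ j))"
      unfolding ei by simp
    show ?thesis unfolding sum.distrib s1 s2 ..
  qed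
  have eq2: "(\<Sum>i\<in>UNIV. - (2 * u$i * e i) / (\<mu>\<^sup>2 - (u$i)\<^sup>2))
     = - (2 * u$j / (\<mu>\<^sup>2 - (u$j)\<^sup>2))"
  proof -
    have "(\<Sum>i\<in>UNIV. - (2 * u$i * e i) / (\<mu>\<^sup>2 - (u$i)\<^sup>2))
       = (\<Sum>i\<in>UNIV. e i * (- (2 * u$i / (\<mu>\<^sup>2 - (u$i)\<^sup>2))))"
      by (intro sum.cong refl) (simp add: field_simps)
    also have "\<dots> = - (2 * u$j / (\<mu>\<^sup>2 - (u$j)\<^sup>2))"
      unfolding ei sum_of_bool_mult_eq[OF finite_class.finite_UNIV] by simp
    finally show ?thesis .
  qed
  show ?thesis using hd unfolding eq1 eq2 mult_minus_right diff_minus_eq_add by simp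
qed

lemma Fr_lower:
  fixes C :: "real^'n^'n"
  assumes "pos_def_mat C" "\<tau> > 0" "\<mu> > 0" "\<forall>i. \<bar>v$i\<bar> < \<mu>"
  shows "Fr C w \<mu> \<tau> v \<ge> - (ln (\<mu>\<^sup>2 - (v$k)\<^sup>2) + real CARD('n) * \<bar>ln (\<mu>\<^sup>2)\<bar>) / \<tau>"
proof -
  let ?A = "matrix_inv C"
  let ?K = "real CARD('n) * \<bar>ln (\<mu>\<^sup>2)\<bar>"
  have pos: "\<mu>\<^sup>2 - (v$i)\<^sup>2 > 0" for i using sq_lt assms(4) by force
  have q: "(\<Sum>i\<in>UNIV. \<Sum>k\<in>UNIV. (v $ i - w $ i) * (?A $ i $ k) * (v $ k - w $ k)) \<ge> 0"
    using inv_psd[OF assms(1), of "v - w"] unfolding quad_sum by simp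
  have lnle: "ln (\<mu>\<^sup>2 - (v$i)\<^sup>2) \<le> \<bar>ln (\<mu>\<^sup>2)\<bar>" for i
  proof -
    have "ln (\<mu>\<^sup>2 - (v$i)\<^sup>2) \<le> ln (\<mu>\<^sup>2)" using pos[of i] by (intro ln_mono) auto
    then show ?thesis by linarith
  qed
  have "(\<Sum>j\<in>UNIV. ln (\<mu>\<^sup>2 - (v $ j)\<^sup>2)) = ln (\<mu>\<^sup>2 - (v$k)\<^sup>2) + (\<Sum>j\<in>UNIV-{k}. ln (\<mu>\<^sup>2 - (v $ j)\<^sup>2))"
    by (simp add: sum.remove)
  also have "(\<Sum>j\<in>UNIV-{k}. ln (\<mu>\<^sup>2 - (v $ j)\<^sup>2)) \<le> (\<Sum>j\<in>UNIV-{k}. \<bar>ln (\<mu>\<^sup>2)\<bar>)"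
    by (intro sum_mono lnle)
  also have "\<dots> \<le> (\<Sum>j\<in>(UNIV::'n set). \<bar>ln (\<mu>\<^sup>2)\<bar>)"
    by (intro sum_mono2) auto
  also have "\<dots> = ?K" by simp
  finally have S: "(\<Sum>j\<in>UNIV. ln (\<mu>\<^sup>2 - (v $ j)\<^sup>2)) \<le> ln (\<mu>\<^sup>2 - (v$k)\<^sup>2) + ?K" by simp
  have "(1/\<tau>) * (\<Sum>j\<in>UNIV. ln (\<mu>\<^sup>2 - (v $ j)\<^sup>2)) \<le> (1/\<tau>) * (ln (\<mu>\<^sup>2 - (v$k)\<^sup>2) + ?K)"
    using S assms(2) by (intro mult_left_mono) auto
  moreover have "- (ln (\<mu>\<^sup>2 - (v$k)\<^sup>2) + ?K) / \<tau> = - ((1/\<tau>) * (ln (\<mu>\<^sup>2 - (v$k)\<^sup>2) + ?K))" by (simp add: diff_divide_distrib add_divide_distrib)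
  ultimately show ?thesis using q unfolding Fr_def by linarith
qed

lemma crit_to_Rr:
  fixes C :: "real^'n^'n"
  assumes "pos_def_mat C" "\<tau> > 0" "\<bar>u$j\<bar> < \<mu>"
    and "(\<Sum>k\<in>UNIV. (matrix_inv C $ j $ k) * (u$k - w$k))
      + (\<Sum>i\<in>UNIV. (u$i - w$i) * (matrix_inv C $ i $ j))
      + (1/\<tau>) * (2 * u$j / (\<mu>\<^sup>2 - (u$j)\<^sup>2)) = 0"
  shows "Rr C w \<mu> \<tau> u j = 0"
proof -
  let ?A = "matrix_inv C"
  define S where "S = (\<Sum>k\<in>UNIV. (?A $ j $ k) * (u$k - w$k))"
  define D where "D = \<mu>\<^sup>2 - (u$j)\<^sup>2"
  have Dnz: "D \<noteq> 0" using sq_lt[OF assms(3)] unfolding D_def by simp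
  have S2: "(\<Sum>i\<in>UNIV. (u$i - w$i) * (?A $ i $ j)) = S"
    unfolding S_def by (intro sum.cong refl) (simp add: inv_sym[OF assms(1), of _ j])
  have negS: "(?A *v (w - u)) $ j = - S"
    unfolding S_def matrix_vector_mult_def sum_negf[symmetric] by (simp add: algebra_simps)
  have R: "Rr C w \<mu> \<tau> u j = - (D * S + u$j / \<tau>)"
    unfolding Rr_def negS D_def by (simp add: algebra_simps)
  have "2 * S + (1/\<tau>) * (2 * u$j / D) = 0"
    using assms(4) unfolding S2 S_def[symmetric] D_def[symmetric] by simp
  then have "D * (2 * S + (1/\<tau>) * (2 * u$j / D)) = 0" by simp
  then have "2 * (D * S + u$j / \<tau>) = 0" using Dnz by (simp add: algebra_simps)
  then show ?thesis unfolding R by simp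
qed

lemma existence:
  fixes C :: "real^'n^'n"
  assumes "pos_def_mat C" "\<tau> > 0" "\<mu> > 0"
  shows "\<exists>u. (\<forall>j. \<bar>u$j\<bar> < \<mu>) \<and> (\<forall>j. Rr C w \<mu> \<tau> u j = 0)"
proof -
  let ?F = "Fr C w \<mu> \<tau>"
  let ?K = "real CARD('n) * \<bar>ln (\<mu>\<^sup>2)\<bar>"
  define F0 where "F0 = ?F 0"
  define \<delta> where "\<delta> = min (\<mu>\<^sup>2/2) (exp (- \<tau> * F0 - ?K))"
  have \<delta>pos: "\<delta> > 0" using assms(3) unfolding \<delta>_def by simp
  have \<delta>le: "\<delta> \<le> \<mu>\<^sup>2/2" and \<delta>exp: "\<delta> \<le> exp (- \<tau> * F0 - ?K)" unfolding \<delta>_def by auto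
  define r where "r = sqrt (\<mu>\<^sup>2 - \<delta>)"
  have r0: "r \<ge> 0" unfolding r_def using \<delta>le \<delta>pos by (simp add: power2_eq_square)
  have r2: "r\<^sup>2 = \<mu>\<^sup>2 - \<delta>" unfolding r_def using \<delta>le \<delta>pos by simp
  have rlt: "r < \<mu>"
  proof -
    have "r\<^sup>2 < \<mu>\<^sup>2" using r2 \<delta>pos by simp
    then show ?thesis using r0 assms(3) by (metis abs_of_nonneg less_le power2_less_imp_less)
  qed
  define B :: "(real^'n) set" where "B = cbox (\<chi> i. - r) (\<chi> i. r)"
  have memB: "x \<in> B \<longleftrightarrow> (\<forall>i. \<bar>x$i\<bar> \<le> r)" for x :: "real^'n"
    unfolding B_def mem_box_cart(2) by (auto simp: abs_le_iff) (metis minus_le_iff)+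
  have B0: "0 \<in> B" using memB r0 by simp
  have inBox: "\<bar>x$i\<bar> < \<mu>" if "x \<in> B" for x i using memB[of x] that rlt by (meson le_less_trans)
  have sqB: "(x$i)\<^sup>2 < \<mu>\<^sup>2" if "x \<in> B" for x i using inBox[OF that] sq_lt by blast
  have cont: "continuous_on B ?F"
    unfolding Fr_def
    by (intro continuous_intros) (auto dest: sqB)
  obtain u0 where u0B: "u0 \<in> B" and umin: "\<forall>y\<in>B. ?F u0 \<le> ?F y"
    using continuous_attains_inf[OF compact_cbox[of "\<chi> i. - r" "\<chi> i. r"] _ cont[unfolded B_def]] B0
    unfolding B_def by blast
  have big: "?F v > F0" if v: "\<forall>i. \<bar>v$i\<bar> < \<mu>" and k: "\<bar>v$k\<bar> > r" for v k
  proof -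
    have "r\<^sup>2 < \<bar>v$k\<bar>\<^sup>2" using k r0 by (intro power_strict_mono) auto
    then have a_lt: "\<mu>\<^sup>2 - (v$k)\<^sup>2 < \<delta>" using r2 by simp
    have a_pos: "\<mu>\<^sup>2 - (v$k)\<^sup>2 > 0" using sq_lt v by force
    have "ln (\<mu>\<^sup>2 - (v$k)\<^sup>2) < ln (exp (- \<tau> * F0 - ?K))"
      using a_lt \<delta>exp a_pos by (subst ln_less_cancel_iff) auto
    then have L: "ln (\<mu>\<^sup>2 - (v$k)\<^sup>2) + ?K < - \<tau> * F0" by simp
    have "F0 < - (ln (\<mu>\<^sup>2 - (v$k)\<^sup>2) + ?K) / \<tau>"
      using L assms(2) by (simp add: less_divide_eq algebra_simps)
    also have "\<dots> \<le> ?F v" by (rule Fr_lower[OF assms(1,2,3) v])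
    finally show ?thesis .
  qed
  have glob: "?F u0 \<le> ?F v" if v: "\<forall>i. \<bar>v$i\<bar> < \<mu>" for v
  proof (cases "v \<in> B")
    case True then show ?thesis using umin by blast
  next
    case False
    then obtain k where "\<bar>v$k\<bar> > r" using memB by (auto simp: not_le)
    then have "?F v > F0" using big v by blast
    moreover have "?F u0 \<le> F0" unfolding F0_def using umin B0 by blast
    ultimately show ?thesis by simp
  qed
  have u0box: "\<forall>j. \<bar>u0$j\<bar> < \<mu>" using inBox u0B by blast
  have "Rr C w \<mu> \<tau> u0 j = 0" for j
  proof -
    have der: "((\<lambda>t. ?F (u0 + t *s axis j 1)) has_real_derivative
     ((\<Sum>k\<in>UNIV. (matrix_inv C $ j $ k) * (u0$k - w$k))
      + (\<Sum>i\<in>UNIV. (u0$i - w$i) * (matrix_inv C $ i $ j))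
      + (1/\<tau>) * (2 * u0$j / (\<mu>\<^sup>2 - (u0$j)\<^sup>2)))) (at 0)"
      by (rule Fr_deriv[OF u0box])
    have lm: "\<forall>t. \<bar>0 - t\<bar> < \<mu> - r \<longrightarrow> ?F (u0 + 0 *s axis j 1) \<le> ?F (u0 + t *s axis j 1)"
    proof (intro allI impI)
      fix t :: real assume t: "\<bar>0 - t\<bar> < \<mu> - r"
      have "\<bar>(u0 + t *s axis j 1) $ i\<bar> < \<mu>" for i
      proof -
        have ax: "\<bar>(axis j 1 :: real^'n) $ i\<bar> \<le> 1" by (simp add: axis_def)
        have "\<bar>(u0 + t *s axis j 1) $ i\<bar> \<le> \<bar>u0$i\<bar> + \<bar>t\<bar> * \<bar>(axis j 1 :: real^'n) $ i\<bar>"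
          by (simp add: abs_mult[symmetric] abs_triangle_ineq)
        also have "\<dots> \<le> r + \<bar>t\<bar>" using memB u0B ax
          by (intro add_mono) (auto intro: mult_left_le[where a="\<bar>t\<bar>", simplified])
        also have "\<dots> < \<mu>" using t by simp
        finally show ?thesis .
      qed
      then show "?F (u0 + 0 *s axis j 1) \<le> ?F (u0 + t *s axis j 1)" using glob by simp
    qed
    have "(\<Sum>k\<in>UNIV. (matrix_inv C $ j $ k) * (u0$k - w$k))
      + (\<Sum>i\<in>UNIV. (u0$i - w$i) * (matrix_inv C $ i $ j))
      + (1/\<tau>) * (2 * u0$j / (\<mu>\<^sup>2 - (u0$j)\<^sup>2)) = 0"
      using DERIV_local_min[OF der _ lm] rlt by simp
    then show ?thesis using crit_to_Rr[OF assms(1,2)] u0box by blast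
  qed
  then show ?thesis using u0box by blast
qed

theorem theorem1:
  fixes C :: "real^'n^'n" and w :: "real^'n" and \<mu> \<tau> :: real
  assumes "pos_def_mat C" and "\<mu> > 0" and "\<tau> > 0"
  shows "\<exists>z. z \<in> strip_dom \<mu> \<and> saddle_point (H_tau C w \<mu> \<tau>) z
           \<and> (\<forall>z'. z' \<in> strip_dom \<mu> \<and> saddle_point (H_tau C w \<mu> \<tau>) z' \<longrightarrow> z' = z)
           \<and> (\<forall>j. Im (z $ j) = 0)
           \<and> (\<forall>j. (\<mu>\<^sup>2 - (Re (z $ j))\<^sup>2) * ((matrix_inv C *v (w - (\<chi> i. Re (z $ i)))) $ j)
                    - Re (z $ j) / \<tau> = 0)"
proof -
  obtain u where ubox: "\<forall>j. \<bar>u$j\<bar> < \<mu>" and uR: "\<forall>j. Rr C w \<mu> \<tau> u j = 0"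
    using existence[OF assms(1,3,2)] by blast
  define z where "z = (\<chi> i. complex_of_real (u$i))"
  have zs: "z \<in> strip_dom \<mu>" using ubox unfolding z_def strip_dom_def by simp
  have zsad: "saddle_point (H_tau C w \<mu> \<tau>) z"
  proof -
    have "\<forall>j. Gc C w \<mu> \<tau> z j = 0" unfolding z_def Gc_of_real using uR by simp
    then show ?thesis using saddle_iff[OF assms(1) zs assms(3)] by blast
  qed
  have Rez: "(\<chi> i. Re (z $ i)) = u" unfolding z_def by (simp add: vec_eq_iff)
  have uniq: "z' = z" if z's: "z' \<in> strip_dom \<mu>" and z'sad: "saddle_point (H_tau C w \<mu> \<tau>) z'" for z'
  proof -
    have G: "\<forall>j. Gc C w \<mu> \<tau> z' j = 0" using saddle_iff[OF assms(1) z's assms(3)] z'sad by blast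
    have im: "Im (z'$j) = 0" for j using im_zero[OF assms(1) z's assms(3) G] .
    define u' where "u' = (\<chi> i. Re (z' $ i))"
    have z'eq: "z' = (\<chi> i. complex_of_real (u'$i))"
      unfolding u'_def using im by (simp add: vec_eq_iff complex_eq_iff)
    have u'R: "\<forall>j. Rr C w \<mu> \<tau> u' j = 0"
      using G Gc_of_real[of C w \<mu> \<tau> u'] unfolding z'eq[symmetric] by simp
    have u'box: "\<forall>j. \<bar>u'$j\<bar> < \<mu>" using z's unfolding strip_dom_def u'_def by simp
    have "u' = u" using real_unique[OF assms(1,3) u'box u'R ubox uR] .
    then show ?thesis using z'eq unfolding z_def by simp
  qed
  have imz: "\<forall>j. Im (z $ j) = 0" unfolding z_def by simp
  have fin: "\<forall>j. (\<mu>\<^sup>2 - (Re (z $ j))\<^sup>2) * ((matrix_inv C *v (w - (\<chi> i. Re (z $ i)))) $ j)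
                    - Re (z $ j) / \<tau> = 0"
    using uR unfolding Rez Rr_def by (simp add: z_def)
  show ?thesis using zs zsad uniq imz fin by blast
qed

end
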